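(* Let $\mathcal{A},\mathcal{B}$ be symmetric real $m$-th order $n$-dimensional tensors ($n=n_1+\cdots+n_r$) with $\mathcal{A}$ strictly $\mathcal{K}$-positive, i.e. $\mathcal{A}x^m>0$ for all $x\in\mathcal{K}\setminus\{0\}$. Let $\bar x$ be a stationary point of the problem $$\max\ \lambda(x):=\frac{\mathcal{B}x^m}{\mathcal{A}x^m}\quad\text{s.t.}\quad (x^i_\circ)^2-\|x^i_\bullet\|^2\ge 0,\ x^i_\circ\ge 0\ (i=1,\ldots,r),\quad e^\top x=1.$$ Then $(\bar x,\lambda(\bar x))$ is a solution of the second-order cone tensor eigenvalue complementarity problem, i.e. $\bar x\neq0$, $\bar x\in\mathcal{K}$, $\bar w:=(\lambda(\bar x)\mathcal{A}-\mathcal{B})\bar x^{m-1}\in\mathcal{K}$ and $\langle\bar x,\bar w\rangle=0$.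
   Context: A real $m$-th order $n$-dimensional tensor is an array $\mathcal{A}=(a_{i_1\ldots i_m})$; it is symmetric if its entries are invariant under any permutation of the indices. For $x\in\mathbb{R}^n$, $\mathcal{A}x^{m-1}\in\mathbb{R}^n$ has $i$-th component $\sum_{i_2,\ldots,i_m} a_{ii_2\ldots i_m}x_{i_2}\cdots x_{i_m}$ and $\mathcal{A}x^m=\sum_{i_1,\ldots,i_m} a_{i_1\ldots i_m}x_{i_1}\cdots x_{i_m}$. Vectors are written $x=(x^1,\ldots,x^r)\in\mathbb{R}^{n_1}\times\cdots\times\mathbb{R}^{n_r}$ with $x^i=(x^i_\circ,x^i_\bullet)\in\mathbb{R}\times\mathbb{R}^{n_i-1}$. $\mathcal{K}=\mathcal{K}^{n_1}\times\cdots\times\mathcal{K}^{n_r}$ with $\mathcal{K}^{n_i}=\{x^i: x^i_\circ\ge\|x^i_\bullet\|\}$. $e=(e^1,\ldots,e^r)$ with $e^i=(1,0,\ldots,0)^\top\in\mathbb{R}^{n_i}$. A stationary point of the maximization problem is a feasible point $\bar x$ satisfying the KKT conditions: there exist $\beta,\gamma\in\mathbb{R}^r_+$ and $\delta\in\mathbb{R}$ with $\nabla\lambda(\bar x)+\sum_i\beta_i\nabla g_i(\bar x)+\sum_i\gamma_i\nabla h_i(\bar x)+\delta e=0$, $\beta_i g_i(\bar x)=0$, $\gamma_i h_i(\bar x)=0$, where $g_i(x)=(x^i_\circ)^2-\|x^i_\bullet\|^2$ and $h_i(x)=x^i_\circ$. *)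

theory Defs
  imports "HOL-Analysis.Analysis"
begin

text \<open>An m-th order n-dimensional real tensor is a function
  from index lists to reals; only lists of length m with entries < n matter.
  Vectors of R^n are functions nat => real; only components 0..n-1 matter.\<close>

type_synonym tensor = "nat list \<Rightarrow> real"
type_synonym vec = "nat \<Rightarrow> real"

definition idx :: "nat \<Rightarrow> nat \<Rightarrow> nat list set" where
  "idx k n = {is. length is = k \<and> set is \<subseteq> {..<n}}"

definition symmetric_tensor :: "nat \<Rightarrow> nat \<Rightarrow> tensor \<Rightarrow> bool" where
  "symmetric_tensor m n A \<longleftrightarrow>
     (\<forall>is\<in>idx m n. \<forall>js\<in>idx m n. mset is = mset js \<longrightarrow> A is = A js)"

definition tpow :: "nat \<Rightarrow> nat \<Rightarrow> tensor \<Rightarrow> vec \<Rightarrow> real" where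
  "tpow m n A x = (\<Sum>is\<in>idx m n. A is * prod_list (map x is))"

definition tvec :: "nat \<Rightarrow> nat \<Rightarrow> tensor \<Rightarrow> vec \<Rightarrow> vec" where
  "tvec m n A x i = (\<Sum>is\<in>idx (m - 1) n. A (i # is) * prod_list (map x is))"

text \<open>Block structure n = n_1 + ... + n_r given by the list ns.
  Block i occupies components off ns i, ..., off ns i + ns!i - 1;
  its first component is x^i_circ, the remaining ones form x^i_bullet.\<close>
definition off :: "nat list \<Rightarrow> nat \<Rightarrow> nat" where
  "off ns i = sum_list (take i ns)"

definition xcirc :: "nat list \<Rightarrow> nat \<Rightarrow> vec \<Rightarrow> real" where
  "xcirc ns i x = x (off ns i)"

definition xbullet_norm :: "nat list \<Rightarrow> nat \<Rightarrow> vec \<Rightarrow> real" where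
  "xbullet_norm ns i x = sqrt (\<Sum>j\<in>{1..<ns!i}. (x (off ns i + j))\<^sup>2)"

definition inK :: "nat list \<Rightarrow> vec \<Rightarrow> bool" where
  "inK ns x \<longleftrightarrow> (\<forall>i<length ns. xcirc ns i x \<ge> xbullet_norm ns i x)"

definition nonzero :: "nat \<Rightarrow> vec \<Rightarrow> bool" where
  "nonzero n x \<longleftrightarrow> (\<exists>k<n. x k \<noteq> 0)"

definition inner_n :: "nat \<Rightarrow> vec \<Rightarrow> vec \<Rightarrow> real" where
  "inner_n n x y = (\<Sum>k<n. x k * y k)"

definition evec :: "nat list \<Rightarrow> vec" where
  "evec ns k = (if \<exists>i<length ns. k = off ns i then 1 else 0)"

definition gcon :: "nat list \<Rightarrow> nat \<Rightarrow> vec \<Rightarrow> real" where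
  "gcon ns i x = (xcirc ns i x)\<^sup>2 - (xbullet_norm ns i x)\<^sup>2"

definition hcon :: "nat list \<Rightarrow> nat \<Rightarrow> vec \<Rightarrow> real" where
  "hcon ns i x = xcirc ns i x"

definition lam :: "nat \<Rightarrow> nat \<Rightarrow> tensor \<Rightarrow> tensor \<Rightarrow> vec \<Rightarrow> real" where
  "lam m n A B x = tpow m n B x / tpow m n A x"

definition grad :: "(vec \<Rightarrow> real) \<Rightarrow> vec \<Rightarrow> nat \<Rightarrow> real" where
  "grad f x k = deriv (\<lambda>t. f (x(k := t))) (x k)"

definition feasible :: "nat list \<Rightarrow> vec \<Rightarrow> bool" where
  "feasible ns x \<longleftrightarrow>
     (\<forall>i<length ns. gcon ns i x \<ge> 0 \<and> hcon ns i x \<ge> 0) \<and>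
     inner_n (sum_list ns) (evec ns) x = 1"

definition stationary :: "nat \<Rightarrow> nat list \<Rightarrow> tensor \<Rightarrow> tensor \<Rightarrow> vec \<Rightarrow> bool" where
  "stationary m ns A B x \<longleftrightarrow> feasible ns x \<and>
     (\<exists>\<beta> \<gamma> :: nat \<Rightarrow> real. \<exists>\<delta> :: real.
        (\<forall>i<length ns. \<beta> i \<ge> 0 \<and> \<gamma> i \<ge> 0) \<and>
        (\<forall>k<sum_list ns.
           grad (lam m (sum_list ns) A B) x k
           + (\<Sum>i<length ns. \<beta> i * grad (gcon ns i) x k)
           + (\<Sum>i<length ns. \<gamma> i * grad (hcon ns i) x k)
           + \<delta> * evec ns k = 0) \<and>
        (\<forall>i<length ns. \<beta> i * gcon ns i x = 0 \<and> \<gamma> i * hcon ns i x = 0))"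

end

theory Submission
  imports Defs
begin

lemma finite_idx: "finite (idx m n)"
proof -
  have "idx m n = {xs. set xs \<subseteq> {..<n} \<and> length xs = m}" unfolding idx_def by auto
  thus ?thesis using finite_lists_length_eq[of "{..<n}" m] by simp
qed

lemma idx_0: "idx 0 n = {[]}" unfolding idx_def by auto

lemma idx_Suc: "idx (Suc m) n = (\<lambda>(i,is). i#is) ` ({..<n} \<times> idx m n)"
  unfolding idx_def by (auto simp: length_Suc_conv image_iff)

lemma sum_idx_Suc: "(\<Sum>is\<in>idx (Suc m) n. f is) = (\<Sum>i<n. \<Sum>is\<in>idx m n. f (i#is))"
proof -
  have inj: "inj_on (\<lambda>(i,is). i#is) ({..<n} \<times> idx m n)" by (auto simp: inj_on_def)
  have "(\<Sum>is\<in>idx (Suc m) n. f is) = (\<Sum>p\<in>{..<n} \<times> idx m n. f ((\<lambda>(i,is). i#is) p))"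
    unfolding idx_Suc by (rule sum.reindex[OF inj, unfolded comp_def])
  also have "\<dots> = (\<Sum>i<n. \<Sum>is\<in>idx m n. f (i#is))"
    by (subst sum.cartesian_product) (simp add: split_def)
  finally show ?thesis .
qed

lemma tpow_Suc: "tpow (Suc m) n A y = (\<Sum>i<n. y i * tpow m n (\<lambda>is. A (i#is)) y)"
  unfolding tpow_def sum_idx_Suc by (simp add: sum_distrib_left mult_ac)

lemma tvec_Suc: "tvec (Suc m) n A x k = tpow m n (\<lambda>is. A (k#is)) x"
  unfolding tvec_def tpow_def by simp

lemma tpow_0: "tpow 0 n A y = A []" unfolding tpow_def idx_0 by simp

lemma sym_Suc: "symmetric_tensor (Suc M) n A \<Longrightarrow> i < n \<Longrightarrow> symmetric_tensor M n (\<lambda>is. A (i#is))"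
  unfolding symmetric_tensor_def idx_def by auto

lemma sym_swap: "symmetric_tensor (Suc (Suc M)) n A \<Longrightarrow> i < n \<Longrightarrow> k < n \<Longrightarrow> is \<in> idx M n
   \<Longrightarrow> A (i#k#is) = A (k#i#is)"
  unfolding symmetric_tensor_def idx_def
  by (drule bspec[of _ _ "i#k#is"], simp, drule bspec[of _ _ "k#i#is"], auto simp: add_mset_commute)

lemma euler: "1 \<le> m \<Longrightarrow> (\<Sum>k<n. x k * tvec m n A x k) = tpow m n A x"
  by (cases m) (auto simp: tpow_Suc tvec_Suc)

lemma tpow_deriv:
  "symmetric_tensor M n A \<Longrightarrow> k < n \<Longrightarrow>
   ((\<lambda>t. tpow M n A (x(k:=t))) has_real_derivative (real M * tvec M n A x k)) (at (x k))"
proof (induction M arbitrary: A)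
  case 0
  then show ?case by (simp add: tpow_0)
next
  case (Suc M)
  have d1: "((\<lambda>t. (x(k:=t)) i) has_real_derivative (if i = k then 1 else 0)) (at (x k))" for i
    by (cases "i = k") auto
  have d: "((\<lambda>t. (x(k:=t)) i * tpow M n (\<lambda>is. A (i#is)) (x(k:=t))) has_real_derivative
      ((if i = k then 1 else 0) * tpow M n (\<lambda>is. A (i#is)) x + (real M * tvec M n (\<lambda>is. A (i#is)) x k) * x i)) (at (x k))"
    if "i \<in> {..<n}" for i
    using DERIV_mult[OF d1 Suc.IH[OF sym_Suc[OF Suc.prems(1)] Suc.prems(2)]] that by (simp only: fun_upd_triv lessThan_iff)
  have D: "((\<lambda>t. tpow (Suc M) n A (x(k:=t))) has_real_derivative
      (\<Sum>i<n. (if i = k then 1 else 0) * tpow M n (\<lambda>is. A (i#is)) x + (real M * tvec M n (\<lambda>is. A (i#is)) x k) * x i)) (at (x k))"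
    unfolding tpow_Suc by (rule DERIV_sum[OF d])
  have key: "real M * (\<Sum>i<n. x i * tvec M n (\<lambda>is. A (i#is)) x k) = real M * tpow M n (\<lambda>is. A (k#is)) x"
  proof (cases M)
    case 0 then show ?thesis by simp
  next
    case (Suc M')
    have "(\<Sum>i<n. x i * tvec M n (\<lambda>is. A (i#is)) x k) = (\<Sum>i<n. x i * tpow M' n (\<lambda>is. A (k#i#is)) x)"
      unfolding Suc tvec_Suc tpow_def
      using sym_swap[of M' n A _ k] Suc.prems \<open>M = Suc M'\<close>
      by (intro sum.cong refl arg_cong2[where f="(*)"]) auto
    also have "\<dots> = tpow M n (\<lambda>is. A (k#is)) x" unfolding Suc tpow_Suc by simp
    finally show ?thesis by simp
  qed
  have "(\<Sum>i<n. (if i = k then 1 else 0) * tpow M n (\<lambda>is. A (i#is)) x + (real M * tvec M n (\<lambda>is. A (i#is)) x k) * x i)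
        = tpow M n (\<lambda>is. A (k#is)) x + real M * (\<Sum>i<n. x i * tvec M n (\<lambda>is. A (i#is)) x k)"
    using Suc.prems(2) by (simp add: sum.distrib sum_distrib_left mult_ac if_distrib[where f="\<lambda>c. c * _"] sum.delta cong: if_cong)
  also have "\<dots> = real (Suc M) * tvec (Suc M) n A x k" using key by (simp add: tvec_Suc algebra_simps)
  finally have E: "(\<Sum>i<n. (if i = k then 1 else 0) * tpow M n (\<lambda>is. A (i#is)) x + (real M * tvec M n (\<lambda>is. A (i#is)) x k) * x i) = real (Suc M) * tvec (Suc M) n A x k" .
  show ?case using D unfolding E .
qed


lemma off_Suc: "i < length ns \<Longrightarrow> off ns (Suc i) = off ns i + ns!i"
  unfolding off_def by (simp add: take_Suc_conv_app_nth)

lemma off_le: "i \<le> j \<Longrightarrow> off ns i \<le> off ns j"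
proof (induction j)
  case 0 then show ?case by simp
next
  case (Suc j)
  have "off ns j \<le> off ns (Suc j)"
  proof (cases "j < length ns")
    case True then show ?thesis by (simp add: off_Suc)
  next
    case False then show ?thesis by (simp add: off_def)
  qed
  with Suc show ?case by (cases "i = Suc j") auto
qed

lemma off_len: "off ns (length ns) = sum_list ns" unfolding off_def by simp

lemma block_bound: "i < length ns \<Longrightarrow> off ns i + ns!i \<le> sum_list ns"
  using off_le[of "Suc i" "length ns" ns] off_Suc[of i ns] off_len[of ns] by simp

lemma block_disj: "i < l \<Longrightarrow> l < length ns \<Longrightarrow> off ns i + ns!i \<le> off ns l"
  using off_le[of "Suc i" l ns] off_Suc[of i ns] by simp

lemma block_uniq: "i < length ns \<Longrightarrow> l < length ns \<Longrightarrow> off ns i \<le> k \<Longrightarrow> k < off ns i + ns!i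
  \<Longrightarrow> off ns l \<le> k \<Longrightarrow> k < off ns l + ns!l \<Longrightarrow> i = l"
  using block_disj[of i l ns] block_disj[of l i ns] by (cases i l rule: linorder_cases) auto

definition cc :: "nat list \<Rightarrow> nat \<Rightarrow> nat \<Rightarrow> real" where
  "cc ns l k = (if k = off ns l then 1 else -1)"

lemma gcon_rep: "1 \<le> ns!l \<Longrightarrow>
  gcon ns l y = (\<Sum>k\<in>{off ns l..<off ns l + ns!l}. cc ns l k * (y k)\<^sup>2)"
proof -
  assume N: "1 \<le> ns!l"
  define p where "p = off ns l"
  define N where "N = ns!l"
  have sq: "(xbullet_norm ns l y)\<^sup>2 = (\<Sum>j\<in>{1..<N}. (y (p + j))\<^sup>2)"
    unfolding xbullet_norm_def p_def N_def by (simp add: sum_nonneg)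
  have "(\<Sum>k\<in>{p..<p + N}. cc ns l k * (y k)\<^sup>2) = cc ns l p * (y p)\<^sup>2 + (\<Sum>k\<in>{Suc p..<p + N}. cc ns l k * (y k)\<^sup>2)"
    using N unfolding N_def by (subst sum.atLeast_Suc_lessThan) auto
  also have "(\<Sum>k\<in>{Suc p..<p + N}. cc ns l k * (y k)\<^sup>2) = (\<Sum>j\<in>{1..<N}. cc ns l (j + p) * (y (j + p))\<^sup>2)"
    using sum.shift_bounds_nat_ivl[of "\<lambda>k. cc ns l k * (y k)\<^sup>2" 1 p N] by (simp add: add.commute)
  also have "\<dots> = - (\<Sum>j\<in>{1..<N}. (y (p + j))\<^sup>2)"
    by (simp add: cc_def p_def sum_negf add.commute)
  finally show ?thesis unfolding gcon_def sq by (simp add: p_def N_def cc_def xcirc_def)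
qed

lemma quad_deriv: "finite S \<Longrightarrow>
  ((\<lambda>t. \<Sum>j\<in>S. c j * ((x(k:=t)) j)\<^sup>2) has_real_derivative (if k \<in> S then 2 * c k * x k else 0)) (at (x k))"
proof -
  assume S: "finite S"
  have d: "((\<lambda>t. c j * ((x(k:=t)) j)\<^sup>2) has_real_derivative (if j = k then 2 * c k * x k else 0)) (at (x k))" for j
  proof (cases "j = k")
    case True
    have "((\<lambda>t. c k * t\<^sup>2) has_real_derivative c k * (2 * x k)) (at (x k))"
      by (auto intro!: derivative_eq_intros)
    then show ?thesis using True by (simp add: mult_ac)
  qed simp
  have "((\<lambda>t. \<Sum>j\<in>S. c j * ((x(k:=t)) j)\<^sup>2) has_real_derivative (\<Sum>j\<in>S. if j = k then 2 * c k * x k else 0)) (at (x k))"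
    by (rule DERIV_sum[OF d])
  moreover have "(\<Sum>j\<in>S. if j = k then 2 * c k * x k else 0) = (if k \<in> S then 2 * c k * x k else 0)"
    using S by (simp add: sum.delta')
  ultimately show ?thesis by simp
qed

lemma grad_gcon: "1 \<le> ns!l \<Longrightarrow> grad (gcon ns l) x k =
   (if k \<in> {off ns l..<off ns l + ns!l} then 2 * cc ns l k * x k else 0)"
  unfolding grad_def gcon_rep by (rule DERIV_imp_deriv[OF quad_deriv]) simp

lemma grad_hcon: "grad (hcon ns l) x k = (if k = off ns l then 1 else 0)"
proof -
  have "((\<lambda>t. (x(k:=t)) (off ns l)) has_real_derivative (if k = off ns l then 1 else 0)) (at (x k))"
    by (cases "k = off ns l") auto
  then show ?thesis unfolding grad_def hcon_def xcirc_def by (rule DERIV_imp_deriv)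
qed

lemma grad_lam: "symmetric_tensor m n A \<Longrightarrow> symmetric_tensor m n B \<Longrightarrow> k < n \<Longrightarrow>
  tpow m n A x \<noteq> 0 \<Longrightarrow> grad (lam m n A B) x k =
   - (real m / tpow m n A x) * (lam m n A B x * tvec m n A x k - tvec m n B x k)"
proof -
  assume sA: "symmetric_tensor m n A" and sB: "symmetric_tensor m n B" and k: "k < n"
    and a: "tpow m n A x \<noteq> 0"
  have "((\<lambda>t. tpow m n B (x(k:=t)) / tpow m n A (x(k:=t))) has_real_derivative
     (real m * tvec m n B x k * tpow m n A (x(k:=x k)) - tpow m n B (x(k:=x k)) * (real m * tvec m n A x k))
       / (tpow m n A (x(k:=x k)) * tpow m n A (x(k:=x k)))) (at (x k))"
    by (rule DERIV_divide[OF tpow_deriv[OF sB k] tpow_deriv[OF sA k]]) (use a in simp)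
  then have "grad (lam m n A B) x k = (real m * tvec m n B x k * tpow m n A x - tpow m n B x * (real m * tvec m n A x k))
       / (tpow m n A x * tpow m n A x)"
    unfolding grad_def lam_def by (intro DERIV_imp_deriv) simp
  also have "\<dots> = - (real m / tpow m n A x) * (lam m n A B x * tvec m n A x k - tvec m n B x k)"
    using a unfolding lam_def by (simp add: field_simps)
  finally show ?thesis .
qed


theorem theorem2:
  fixes m :: nat and ns :: "nat list" and A B :: tensor and xb :: vec
  defines "n \<equiv> sum_list ns"
  assumes m: "m \<ge> 1"
    and r: "ns \<noteq> []"
    and blocks: "\<forall>i<length ns. ns ! i \<ge> 1"
    and symA: "symmetric_tensor m n A"
    and symB: "symmetric_tensor m n B"
    and posA: "\<forall>x. inK ns x \<and> nonzero n x \<longrightarrow> tpow m n A x > 0"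
    and stat: "stationary m ns A B xb"
  shows "nonzero n xb \<and> inK ns xb \<and>
         (let w = (\<lambda>k. lam m n A B xb * tvec m n A xb k - tvec m n B xb k)
          in inK ns w \<and> inner_n n xb w = 0)"
proof -
  define x where "x = xb"
  define G where "G l k = (if k \<in> {off ns l..<off ns l + ns!l} then 2 * cc ns l k * x k else 0)" for l k
  define H where "H l k = (if k = off ns l then 1 else (0::real))" for l k
  define w where "w k = lam m n A B x * tvec m n A x k - tvec m n B x k" for k
  define a where "a = tpow m n A x"
  define L where "L = length ns"
  have feas: "feasible ns x" using stat unfolding stationary_def x_def by blast
  obtain \<beta> \<gamma> \<delta> where bg: "\<forall>i<L. \<beta> i \<ge> 0 \<and> \<gamma> i \<ge> 0"
    and kkt0: "\<forall>k<n. grad (lam m n A B) x k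
           + (\<Sum>i<L. \<beta> i * grad (gcon ns i) x k)
           + (\<Sum>i<L. \<gamma> i * grad (hcon ns i) x k)
           + \<delta> * evec ns k = 0"
    and cs: "\<forall>i<L. \<beta> i * gcon ns i x = 0 \<and> \<gamma> i * hcon ns i x = 0"
    using stat unfolding stationary_def x_def n_def L_def by blast
  have e1: "inner_n n (evec ns) x = 1" using feas unfolding feasible_def n_def by blast
  have gh: "\<forall>i<L. gcon ns i x \<ge> 0 \<and> hcon ns i x \<ge> 0" using feas unfolding feasible_def L_def by blast
  have bl: "\<And>i. i < L \<Longrightarrow> 1 \<le> ns!i" using blocks L_def by blast
  have bb: "\<And>i. i < L \<Longrightarrow> off ns i + ns!i \<le> n" using block_bound unfolding n_def L_def by blast
  have offn: "\<And>i. i < L \<Longrightarrow> off ns i < n" using bb bl by (metis add_le_imp_le_left le_less_trans less_add_same_cancel1 less_le_trans zero_less_one)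
  have uniq: "\<And>i l k. i < L \<Longrightarrow> l < L \<Longrightarrow> off ns i \<le> k \<Longrightarrow> k < off ns i + ns!i
     \<Longrightarrow> off ns l \<le> k \<Longrightarrow> k < off ns l + ns!l \<Longrightarrow> i = l"
    using block_uniq unfolding L_def by blast
  have nz: "nonzero n x"
  proof (rule ccontr)
    assume "\<not> nonzero n x"
    then have "\<forall>k<n. x k = 0" unfolding nonzero_def by auto
    then have "inner_n n (evec ns) x = 0" unfolding inner_n_def by simp
    with e1 show False by simp
  qed
  have xK: "inK ns x"
    unfolding inK_def
  proof (intro allI impI)
    fix i assume i: "i < length ns"
    have "(xbullet_norm ns i x)\<^sup>2 \<le> (xcirc ns i x)\<^sup>2" "0 \<le> xcirc ns i x"
      using gh i unfolding L_def gcon_def hcon_def by auto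
    then show "xbullet_norm ns i x \<le> xcirc ns i x" by (rule power2_le_imp_le)
  qed
  have apos: "a > 0" using posA nz xK unfolding a_def by blast
  have mpos: "real m > 0" using m by simp
  have inner0: "inner_n n x w = 0"
  proof -
    have "inner_n n x w = lam m n A B x * (\<Sum>k<n. x k * tvec m n A x k) - (\<Sum>k<n. x k * tvec m n B x k)"
      unfolding inner_n_def w_def by (simp add: sum_distrib_left sum_subtractf algebra_simps)
    also have "\<dots> = 0" using apos unfolding euler[OF m] lam_def a_def by simp
    finally show ?thesis .
  qed
  have kkt: "\<forall>k<n. w k = (a / real m) * ((\<Sum>l<L. \<beta> l * G l k) + (\<Sum>l<L. \<gamma> l * H l k) + \<delta> * evec ns k)"
  proof (intro allI impI)
    fix k assume k: "k < n"
    have g1: "grad (lam m n A B) x k = - (real m / a) * w k"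
      using grad_lam[OF symA symB k] apos unfolding a_def w_def by simp
    have g2: "(\<Sum>i<L. \<beta> i * grad (gcon ns i) x k) = (\<Sum>l<L. \<beta> l * G l k)"
      using grad_gcon bl unfolding G_def by (intro sum.cong) auto
    have g3: "(\<Sum>i<L. \<gamma> i * grad (hcon ns i) x k) = (\<Sum>l<L. \<gamma> l * H l k)"
      using grad_hcon unfolding H_def by (intro sum.cong) auto
    have "- (real m / a) * w k + ((\<Sum>l<L. \<beta> l * G l k) + (\<Sum>l<L. \<gamma> l * H l k) + \<delta> * evec ns k) = 0"
    proof -
      have "grad (lam m n A B) x k + (\<Sum>i<L. \<beta> i * grad (gcon ns i) x k)
           + (\<Sum>i<L. \<gamma> i * grad (hcon ns i) x k) + \<delta> * evec ns k = 0" using kkt0 k by blast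
      then show ?thesis unfolding g1 g2 g3 by linarith
    qed
    then show "w k = (a / real m) * ((\<Sum>l<L. \<beta> l * G l k) + (\<Sum>l<L. \<gamma> l * H l k) + \<delta> * evec ns k)"
      using apos mpos by (simp add: field_simps)
  qed
  have sG: "(\<Sum>k<n. x k * G l k) = 2 * gcon ns l x" if l: "l < L" for l
  proof -
    have sub: "{..<n} \<inter> {off ns l..<off ns l + ns!l} = {off ns l..<off ns l + ns!l}"
      using bb[OF l] by auto
    have "(\<Sum>k<n. x k * G l k) = (\<Sum>k<n. if k \<in> {off ns l..<off ns l + ns!l} then 2 * (cc ns l k * (x k)\<^sup>2) else 0)"
      unfolding G_def by (intro sum.cong) (auto simp: power2_eq_square)
    also have "\<dots> = (\<Sum>k\<in>{off ns l..<off ns l + ns!l}. 2 * (cc ns l k * (x k)\<^sup>2))"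
      by (subst sum.inter_restrict[symmetric]) (auto simp: sub)
    also have "\<dots> = 2 * gcon ns l x" using gcon_rep[OF bl[OF l]] by (simp add: sum_distrib_left)
    finally show ?thesis .
  qed
  have sH: "(\<Sum>k<n. x k * H l k) = hcon ns l x" if l: "l < L" for l
  proof -
    have "(\<Sum>k<n. x k * H l k) = (\<Sum>k<n. if k = off ns l then x k else 0)"
      unfolding H_def by (intro sum.cong) auto
    also have "\<dots> = hcon ns l x" using offn[OF l] by (simp add: hcon_def xcirc_def)
    finally show ?thesis .
  qed
  have delta0: "\<delta> = 0"
  proof -
    have "(\<Sum>k<n. x k * w k) = (a / real m) * ((\<Sum>k<n. x k * (\<Sum>l<L. \<beta> l * G l k)) + (\<Sum>k<n. x k * (\<Sum>l<L. \<gamma> l * H l k)) + \<delta> * (\<Sum>k<n. x k * evec ns k))"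
      using kkt by (simp add: sum_distrib_left sum.distrib algebra_simps)
    also have "(\<Sum>k<n. x k * (\<Sum>l<L. \<beta> l * G l k)) = (\<Sum>l<L. \<beta> l * (\<Sum>k<n. x k * G l k))"
      by (simp add: sum_distrib_left mult_ac) (rule sum.swap)
    also have "\<dots> = 0" using sG cs by (intro sum.neutral) auto
    also have "(\<Sum>k<n. x k * (\<Sum>l<L. \<gamma> l * H l k)) = (\<Sum>l<L. \<gamma> l * (\<Sum>k<n. x k * H l k))"
      by (simp add: sum_distrib_left mult_ac) (rule sum.swap)
    also have "\<dots> = 0" using sH cs by (intro sum.neutral) auto
    also have "(\<Sum>k<n. x k * evec ns k) = 1" using e1 unfolding inner_n_def by (simp add: mult_ac)
    finally have "(a / real m) * \<delta> = 0" using inner0 unfolding inner_n_def by simp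
    then show ?thesis using apos mpos by simp
  qed
  have wK: "inK ns w"
    unfolding inK_def
  proof (intro allI impI)
    fix i assume i: "i < length ns"
    then have iL: "i < L" unfolding L_def .
    define p where "p = off ns i"
    define N where "N = ns!i"
    have N1: "1 \<le> N" using bl[OF iL] N_def by simp
    have pn: "p < n" using offn[OF iL] p_def by simp
    have Gp: "(\<Sum>l<L. \<beta> l * G l p) = \<beta> i * (2 * x p)"
    proof -
      have "\<beta> l * G l p = (if l = i then \<beta> i * (2 * x p) else 0)" if l: "l < L" for l
      proof (cases "l = i")
        case True then show ?thesis using N1 by (simp add: G_def cc_def p_def N_def)
      next
        case False
        have "\<not> (off ns l \<le> p \<and> p < off ns l + ns!l)"
          using uniq[OF iL l, of p] False N1 unfolding p_def N_def by auto
        then show ?thesis using False by (auto simp: G_def)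
      qed
      then show ?thesis using iL by (simp add: sum.delta)
    qed
    have Hp: "(\<Sum>l<L. \<gamma> l * H l p) = \<gamma> i"
    proof -
      have "\<gamma> l * H l p = (if l = i then \<gamma> i else 0)" if l: "l < L" for l
      proof (cases "l = i")
        case True then show ?thesis by (simp add: H_def p_def)
      next
        case False
        have "off ns l \<noteq> p"
          using uniq[OF iL l, of p] False N1 bl[OF l] unfolding p_def N_def by auto
        then show ?thesis using False by (simp add: H_def)
      qed
      then show ?thesis using iL by (simp add: sum.delta)
    qed
    have ep: "evec ns p = 1" using i unfolding evec_def p_def by auto
    have wp: "w p = (a / real m) * (2 * \<beta> i * x p + \<gamma> i)"
      using kkt pn Gp Hp ep delta0 by simp
    have wj: "w (p + j) = (a / real m) * (- 2 * \<beta> i * x (p + j))" if j: "j \<in> {1..<N}" for j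
    proof -
      have kn: "p + j < n" using bb[OF iL] j unfolding p_def N_def by auto
      have noff: "off ns l \<noteq> p + j" if l: "l < L" for l
      proof
        assume eq: "off ns l = p + j"
        then have "l = i" using uniq[OF iL l, of "p+j"] j bl[OF l] unfolding p_def N_def by auto
        then show False using eq j p_def by simp
      qed
      have Gk: "(\<Sum>l<L. \<beta> l * G l (p+j)) = \<beta> i * (- 2 * x (p+j))"
      proof -
        have "\<beta> l * G l (p+j) = (if l = i then \<beta> i * (- 2 * x (p+j)) else 0)" if l: "l < L" for l
        proof (cases "l = i")
          case True then show ?thesis using j by (auto simp: G_def cc_def p_def N_def)
        next
          case False
          have "\<not> (off ns l \<le> p + j \<and> p + j < off ns l + ns!l)"
            using uniq[OF iL l, of "p+j"] False j unfolding p_def N_def by auto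
          then show ?thesis using False by (auto simp: G_def)
        qed
        then show ?thesis using iL by (simp add: sum.delta)
      qed
      have Hk: "(\<Sum>l<L. \<gamma> l * H l (p+j)) = 0"
        using noff by (intro sum.neutral) (force simp: H_def)
      have ek: "evec ns (p+j) = 0" using noff unfolding evec_def L_def by metis
      show ?thesis using kkt kn Gk Hk ek by simp
    qed
    define C where "C = (a / real m) * (2 * \<beta> i)"
    have C0: "C \<ge> 0" using apos mpos bg iL unfolding C_def by simp
    have "xbullet_norm ns i w = sqrt (\<Sum>j\<in>{1..<N}. C\<^sup>2 * (x (p + j))\<^sup>2)"
      unfolding xbullet_norm_def p_def[symmetric] N_def[symmetric]
      by (intro arg_cong[where f=sqrt] sum.cong refl) (simp add: wj C_def power_mult_distrib power_divide)
    also have "\<dots> = C * xbullet_norm ns i x"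
      unfolding xbullet_norm_def p_def[symmetric] N_def[symmetric]
      by (simp add: sum_distrib_left[symmetric] real_sqrt_mult C0)
    also have "\<dots> \<le> C * xcirc ns i x" using xK i C0 unfolding inK_def by (simp add: mult_left_mono)
    also have "\<dots> \<le> xcirc ns i w"
      using wp apos mpos bg iL unfolding xcirc_def p_def[symmetric] C_def by (simp add: algebra_simps)
    finally show "xbullet_norm ns i w \<le> xcirc ns i w" .
  qed
  show ?thesis using nz xK wK inner0 unfolding x_def w_def Let_def by simp
qed

end
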